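(* Let $\alpha$ be an automorphism of a commutative ring $R$, $S=R[\theta;\alpha]$, and let $\rho$ be a nonzero non-unit of $R$. Then $S/\rho S$ is not an Artinian right $S$-module.
   Context: $R[\theta;\alpha]$: skew polynomial ring with $\theta r=\alpha(r)\theta$. *)

theory Defs
  imports "HOL-Computational_Algebra.Polynomial"
begin

definition ring_automorphism :: "('a::comm_ring_1 \<Rightarrow> 'a) \<Rightarrow> bool" where
  "ring_automorphism \<alpha> \<longleftrightarrow> bij \<alpha> \<and> \<alpha> 1 = 1 \<and>
     (\<forall>x y. \<alpha> (x + y) = \<alpha> x + \<alpha> y) \<and> (\<forall>x y. \<alpha> (x * y) = \<alpha> x * \<alpha> y)"

text \<open>Skew polynomial ring R[theta;alpha]: elements are polynomials sum r_i theta^i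
  (coefficients written on the left), with theta r = alpha(r) theta, i.e.
  (r theta^i)(s theta^j) = r alpha^i(s) theta^(i+j).\<close>
definition skew_mult :: "('a::comm_ring_1 \<Rightarrow> 'a) \<Rightarrow> 'a poly \<Rightarrow> 'a poly \<Rightarrow> 'a poly" where
  "skew_mult \<alpha> p q =
     (\<Sum>i\<le>degree p. \<Sum>j\<le>degree q. monom (coeff p i * (\<alpha> ^^ i) (coeff q j)) (i + j))"

definition skew_coset :: "('a::comm_ring_1 \<Rightarrow> 'a) \<Rightarrow> 'a \<Rightarrow> 'a poly \<Rightarrow> 'a poly set" where
  "skew_coset \<alpha> \<rho> x = {x + skew_mult \<alpha> [:\<rho>:] s | s. True}"

definition quot_right_submodule ::
  "('a::comm_ring_1 \<Rightarrow> 'a) \<Rightarrow> 'a \<Rightarrow> 'a poly set set \<Rightarrow> bool" where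
  "quot_right_submodule \<alpha> \<rho> N \<longleftrightarrow>
     N \<subseteq> range (skew_coset \<alpha> \<rho>) \<and>
     skew_coset \<alpha> \<rho> 0 \<in> N \<and>
     (\<forall>x y. skew_coset \<alpha> \<rho> x \<in> N \<longrightarrow> skew_coset \<alpha> \<rho> y \<in> N \<longrightarrow>
             skew_coset \<alpha> \<rho> (x + y) \<in> N) \<and>
     (\<forall>x. skew_coset \<alpha> \<rho> x \<in> N \<longrightarrow> skew_coset \<alpha> \<rho> (- x) \<in> N) \<and>
     (\<forall>x s. skew_coset \<alpha> \<rho> x \<in> N \<longrightarrow> skew_coset \<alpha> \<rho> (skew_mult \<alpha> x s) \<in> N)"

definition quot_artinian :: "('a::comm_ring_1 \<Rightarrow> 'a) \<Rightarrow> 'a \<Rightarrow> bool" where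
  "quot_artinian \<alpha> \<rho> \<longleftrightarrow>
     (\<forall>N :: nat \<Rightarrow> 'a poly set set.
        (\<forall>n. quot_right_submodule \<alpha> \<rho> (N n)) \<and> (\<forall>n. N (Suc n) \<subseteq> N n) \<longrightarrow>
        (\<exists>m. \<forall>n\<ge>m. N n = N m))"

end

theory Submission
  imports Defs
begin

lemma smult_sum2: "smult a (sum f A) = (\<Sum>x\<in>A. smult a (f x))"
  by (induction A rule: infinite_finite_induct) (auto simp: smult_add_right)

lemma sm_const: "skew_mult \<alpha> [:\<rho>:] s = smult \<rho> s"
proof -
  have "skew_mult \<alpha> [:\<rho>:] s = (\<Sum>j\<le>degree s. monom (\<rho> * coeff s j) j)"
    by (simp add: skew_mult_def)
  also have "\<dots> = smult \<rho> (\<Sum>j\<le>degree s. monom (coeff s j) j)"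
    by (simp add: smult_sum2 smult_monom)
  also have "\<dots> = smult \<rho> s" by (simp add: poly_as_sum_of_monoms)
  finally show ?thesis .
qed

lemma coset_eq: "skew_coset \<alpha> \<rho> x = {x + smult \<rho> s | s. True}"
  by (simp add: skew_coset_def sm_const)

lemma coset_mem:
  assumes "skew_coset \<alpha> \<rho> y = skew_coset \<alpha> \<rho> x" "\<forall>i<n. \<rho> dvd coeff x i"
  shows "\<forall>i<n. \<rho> dvd coeff y i"
proof -
  have "y \<in> skew_coset \<alpha> \<rho> y" unfolding coset_eq by (rule CollectI, rule exI[of _ 0]) simp
  then have "y \<in> skew_coset \<alpha> \<rho> x" using assms(1) by simp
  then obtain s where "y = x + smult \<rho> s" unfolding coset_eq by auto
  then show ?thesis using assms(2) by auto
qed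

lemma mult_dvd:
  assumes "\<forall>i<n. \<rho> dvd coeff x i"
  shows "\<forall>i<n. \<rho> dvd coeff (skew_mult \<alpha> x s) i"
proof (intro allI impI)
  fix k assume k: "k < n"
  have "coeff (skew_mult \<alpha> x s) k = (\<Sum>i\<le>degree x. \<Sum>j\<le>degree s.
      (if i + j = k then coeff x i * (\<alpha> ^^ i) (coeff s j) else 0))"
    by (simp add: skew_mult_def coeff_sum coeff_monom)
  also have "\<rho> dvd \<dots>"
  proof (intro dvd_sum)
    fix i j
    show "\<rho> dvd (if i + j = k then coeff x i * (\<alpha> ^^ i) (coeff s j) else 0)"
    proof (cases "i + j = k")
      case True
      then have "i < n" using k by linarith
      then show ?thesis using True assms by auto
    qed simp
  qed
  finally show "\<rho> dvd coeff (skew_mult \<alpha> x s) k" .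
qed

theorem lemma4p8:
  fixes \<alpha> :: "'a::comm_ring_1 \<Rightarrow> 'a" and \<rho> :: 'a
  assumes "ring_automorphism \<alpha>"
    and "\<rho> \<noteq> 0"
    and "\<not> \<rho> dvd 1"
  shows "\<not> quot_artinian \<alpha> \<rho>"
proof
  assume art: "quot_artinian \<alpha> \<rho>"
  define N where "N n = skew_coset \<alpha> \<rho> ` {x. \<forall>i<n. \<rho> dvd coeff x i}" for n
  have memN: "skew_coset \<alpha> \<rho> y \<in> N n \<longleftrightarrow> (\<forall>i<n. \<rho> dvd coeff y i)" for y n
  proof
    assume "skew_coset \<alpha> \<rho> y \<in> N n"
    then obtain x where "skew_coset \<alpha> \<rho> y = skew_coset \<alpha> \<rho> x" "\<forall>i<n. \<rho> dvd coeff x i"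
      unfolding N_def by force
    then show "\<forall>i<n. \<rho> dvd coeff y i" by (rule coset_mem)
  qed (auto simp: N_def)
  have sub: "quot_right_submodule \<alpha> \<rho> (N n)" for n
    unfolding quot_right_submodule_def memN
  proof (intro conjI)
    show "N n \<subseteq> range (skew_coset \<alpha> \<rho>)" by (auto simp: N_def)
  next
    show "\<forall>i<n. \<rho> dvd coeff (0::'a poly) i" by simp
  next
    show "\<forall>x y. (\<forall>i<n. \<rho> dvd coeff x i) \<longrightarrow> (\<forall>i<n. \<rho> dvd coeff y i) \<longrightarrow> (\<forall>i<n. \<rho> dvd coeff (x + y) i)" by simp
  next
    show "\<forall>x. (\<forall>i<n. \<rho> dvd coeff x i) \<longrightarrow> (\<forall>i<n. \<rho> dvd coeff (- x) i)" by simp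
  next
    show "\<forall>x s. (\<forall>i<n. \<rho> dvd coeff x i) \<longrightarrow> (\<forall>i<n. \<rho> dvd coeff (skew_mult \<alpha> x s) i)"
      using mult_dvd by blast
  qed
  have dec: "N (Suc n) \<subseteq> N n" for n
    unfolding N_def by force
  from art sub dec obtain m where m: "\<forall>n\<ge>m. N n = N m"
    unfolding quot_artinian_def by blast
  have "skew_coset \<alpha> \<rho> (monom 1 m) \<in> N m" by (simp add: memN coeff_monom)
  moreover have "N (Suc m) = N m" by (rule m[rule_format]) simp
  ultimately have "\<forall>i<Suc m. \<rho> dvd coeff (monom 1 m) i" using memN by metis
  then have "\<rho> dvd 1" by (metis coeff_monom lessI)
  with assms(3) show False by simp
qed

end
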